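(* Let $\mathbf{F}$ be a field of characteristic $2$, $m\ge1$, and let $A,B\in\{0,1\}^m$ with $|A|\ge2$ and $|B|\ge2$. Put $I=A\cap B$, $J=A\setminus B$, $K=B\setminus A$. Then $$\mathrm{Tr}(A)\mathrm{Tr}(B)+\sum_{L<I}x^{I-L}N^L\,\mathrm{Tr}(I-L+J+K)+N^I\sum_{L<J}x^{J-L}\,\mathrm{Tr}(L+K)\in\ker(\pi).$$
   Context: Let $S=\mathbf{F}[x_1,y_1,\dots,x_m,y_m]$ with the $\mathbf{F}$-algebra automorphism $\sigma(x_i)=x_i$, $\sigma(y_i)=y_i+x_i$ of order 2, and let $S^{C_2}$ be the ring of $\sigma$-invariants. For $A=(a_1,\dots,a_m)\in\mathbb{N}^m$ write $x^A=\prod_s x_s^{a_s}$, $y^A=\prod_s y_s^{a_s}$, $N^A=\prod_s N_s^{a_s}$, and $|A|=\sum_s a_s$. $A\le B$ means componentwise $\le$; $L<A$ means $L\le A$, $L\ne A$; sums and differences of sequences are componentwise. Elements of $\{0,1\}^m$ are identified with subsets of $\{1,\dots,m\}$ (via characteristic vectors), and $\cap$, $\setminus$ are the corresponding set operations. $\Delta_s$ is the sequence with $1$ in position $s$ and $0$ elsewhere. For $A\in\{0,1\}^m$, $\mathrm{tr}(A)=y^A+\prod_s(y_s+x_s)^{a_s}\in S^{C_2}$. Let $R=\mathbf{F}[x_1,\dots,x_m,N_1,\dots,N_m]$ be a polynomial ring in $2m$ indeterminates and $Q=R[\mathrm{Tr}(A): A\in\{0,1\}^m,|A|\ge2]$ a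 polynomial ring over $R$. Let $\pi:Q\to S^{C_2}$ be the $\mathbf{F}$-algebra homomorphism with $\pi(x_i)=x_i$, $\pi(N_i)=y_i^2+x_iy_i$, $\pi(\mathrm{Tr}(A))=\mathrm{tr}(A)$. Convention: for $C\in\{0,1\}^m$ with $|C|\le1$, $\mathrm{Tr}(0)=0$ and $\mathrm{Tr}(\Delta_s)=x_s$ in $Q$ (so $\pi(\mathrm{Tr}(C))=\mathrm{tr}(C)$ for all $C$). *)

theory Defs
  imports "HOL-Library.Poly_Mapping"
begin

text \<open>Multivariate polynomials over a coefficient ring 'a in variables of type 'v,
  represented as finitely supported maps from monomials (exponent vectors) to coefficients.\<close>
type_synonym ('v, 'a) mpoly = "('v \<Rightarrow>\<^sub>0 nat) \<Rightarrow>\<^sub>0 'a"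

definition mvar :: "'v \<Rightarrow> ('v, 'a::comm_semiring_1) mpoly" where
  "mvar v = Poly_Mapping.single (Poly_Mapping.single v 1) 1"

definition mconst :: "'a \<Rightarrow> ('v, 'a::comm_semiring_1) mpoly" where
  "mconst c = Poly_Mapping.single 0 c"

definition meval :: "('v \<Rightarrow> 'b::comm_semiring_1) \<Rightarrow> ('a \<Rightarrow> 'b) \<Rightarrow> ('v, 'a::comm_semiring_1) mpoly \<Rightarrow> 'b" where
  "meval img cf p = (\<Sum>mon\<in>Poly_Mapping.keys p. cf (Poly_Mapping.lookup p mon) * (\<Prod>v\<in>Poly_Mapping.keys mon. img v ^ Poly_Mapping.lookup mon v))"

text \<open>Variables of S = F[x_1,y_1,...,x_m,y_m].\<close>
datatype svar = SX nat | SY nat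

type_synonym 'a spoly = "(svar, 'a) mpoly"

text \<open>Variables of Q = F[x_i, N_i][Tr(A)]; Tr(A) is indexed by the subset A of {1..m}.\<close>
datatype qvar = QX nat | QN nat | QT "nat set"

type_synonym 'a qpoly = "(qvar, 'a) mpoly"

definition sx :: "nat \<Rightarrow> 'a::comm_semiring_1 spoly" where "sx i = mvar (SX i)"
definition sy :: "nat \<Rightarrow> 'a::comm_semiring_1 spoly" where "sy i = mvar (SY i)"

definition tr :: "nat set \<Rightarrow> 'a::comm_semiring_1 spoly" where
  "tr A = (\<Prod>s\<in>A. sy s) + (\<Prod>s\<in>A. sy s + sx s)"

definition qx :: "nat \<Rightarrow> 'a::comm_semiring_1 qpoly" where "qx i = mvar (QX i)"
definition qN :: "nat \<Rightarrow> 'a::comm_semiring_1 qpoly" where "qN i = mvar (QN i)"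

text \<open>Tr(C) in Q, with the convention Tr(0) = 0 and Tr(Delta_s) = x_s.\<close>
definition Tr :: "nat set \<Rightarrow> 'a::comm_semiring_1 qpoly" where
  "Tr C = (if card C = 0 then 0
           else if card C = 1 then qx (the_elem C)
           else mvar (QT C))"

fun pi_var :: "qvar \<Rightarrow> 'a::comm_semiring_1 spoly" where
  "pi_var (QX i) = sx i"
| "pi_var (QN i) = sy i ^ 2 + sx i * sy i"
| "pi_var (QT A) = tr A"

definition pi :: "'a::comm_semiring_1 qpoly \<Rightarrow> 'a spoly" where
  "pi p = meval pi_var mconst p"

definition xpow :: "nat set \<Rightarrow> 'a::comm_semiring_1 qpoly" where
  "xpow A = (\<Prod>s\<in>A. qx s)"
definition Npow :: "nat set \<Rightarrow> 'a::comm_semiring_1 qpoly" where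
  "Npow A = (\<Prod>s\<in>A. qN s)"

end

theory Submission
  imports Defs
begin


lemma lookup_sum_single:
  "finite S \<Longrightarrow> Poly_Mapping.lookup (\<Sum>k\<in>S. Poly_Mapping.single k (f k)) j = (if j \<in> S then f j else 0)"
  by (induction S rule: finite_induct) (auto simp: lookup_single lookup_add when_def)

lemma poly_decomp:
  "p = (\<Sum>k\<in>Poly_Mapping.keys p. Poly_Mapping.single k (Poly_Mapping.lookup p k))"
  by (rule poly_mapping_eqI) (simp add: lookup_sum_single in_keys_iff)

definition monoev :: "('v \<Rightarrow> 'b::comm_semiring_1) \<Rightarrow> ('v \<Rightarrow>\<^sub>0 nat) \<Rightarrow> 'b" where
  "monoev img k = (\<Prod>v\<in>Poly_Mapping.keys k. img v ^ Poly_Mapping.lookup k v)"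

lemma mono_superset:
  assumes "finite S" "Poly_Mapping.keys k \<subseteq> S"
  shows "monoev img k = (\<Prod>v\<in>S. img v ^ Poly_Mapping.lookup k v)"
  unfolding monoev_def
  by (rule prod.mono_neutral_left) (use assms in \<open>auto simp: in_keys_iff\<close>)

lemma mono_add: "monoev img (k + l) = monoev img k * monoev img l"
proof -
  let ?S = "Poly_Mapping.keys k \<union> Poly_Mapping.keys l"
  have "monoev img (k + l) = (\<Prod>v\<in>?S. img v ^ Poly_Mapping.lookup (k + l) v)"
    by (rule mono_superset) (auto simp: keys_add)
  also have "\<dots> = (\<Prod>v\<in>?S. img v ^ Poly_Mapping.lookup k v * img v ^ Poly_Mapping.lookup l v)"
    by (simp add: lookup_add power_add)
  also have "\<dots> = monoev img k * monoev img l"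
    by (simp add: prod.distrib mono_superset[of ?S])
  finally show ?thesis .
qed

lemma mono_single1: "monoev img (Poly_Mapping.single v (1::nat)) = img v"
  by (simp add: monoev_def)

lemma meval_alt: "meval img mconst p = (\<Sum>mon\<in>Poly_Mapping.keys p. mconst (Poly_Mapping.lookup p mon) * monoev img mon)"
  by (simp add: meval_def monoev_def)

lemma mconst_add: "mconst (a + b) = mconst a + mconst b"
  by (simp add: mconst_def single_add)
lemma mconst_mult: "mconst (a * b) = (mconst a * mconst b :: ('v,'a::comm_semiring_1) mpoly)"
  by (simp add: mconst_def mult_single)
lemma mconst_0[simp]: "mconst 0 = 0" by (simp add: mconst_def)
lemma mconst_1[simp]: "mconst 1 = 1" by (simp add: mconst_def)

lemma meval_add: "meval img mconst (p + q) = meval img mconst p + meval img mconst q"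
  unfolding meval_alt
  by (rule setsum_keys_plus_distrib) (simp_all add: mconst_add distrib_right)

lemma meval_zero[simp]: "meval img mconst 0 = 0"
  by (simp add: meval_def)

lemma meval_sum: "meval img mconst (\<Sum>i\<in>S. f i) = (\<Sum>i\<in>S. meval img mconst (f i))"
  by (induction S rule: infinite_finite_induct) (simp_all add: meval_add)

lemma meval_single: "meval img mconst (Poly_Mapping.single k c) = mconst c * monoev img k"
  by (cases "c = 0") (simp_all add: meval_alt)

lemma meval_mult: "meval img mconst (p * q) = meval img mconst p * meval img mconst q"
proof -
  let ?P = "Poly_Mapping.keys p" and ?Q = "Poly_Mapping.keys q"
  have "p * q = (\<Sum>k\<in>?P. Poly_Mapping.single k (Poly_Mapping.lookup p k)) *
                (\<Sum>l\<in>?Q. Poly_Mapping.single l (Poly_Mapping.lookup q l))"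
    by (metis poly_decomp)
  also have "\<dots> = (\<Sum>k\<in>?P. \<Sum>l\<in>?Q. Poly_Mapping.single (k + l) (Poly_Mapping.lookup p k * Poly_Mapping.lookup q l))"
    by (simp add: sum_distrib_left sum_distrib_right mult_single sum.swap[of _ ?Q])
  finally have pq: "p * q = \<dots>" .
  have "meval img mconst (p * q) = (\<Sum>k\<in>?P. \<Sum>l\<in>?Q. (mconst (Poly_Mapping.lookup p k) * monoev img k) * (mconst (Poly_Mapping.lookup q l) * monoev img l))"
    unfolding pq meval_sum meval_single
    by (simp add: mconst_mult mono_add algebra_simps)
  also have "\<dots> = meval img mconst p * meval img mconst q"
    by (simp add: meval_alt sum_distrib_left sum_distrib_right sum.swap[of _ ?Q])
  finally show ?thesis .
qed

lemma meval_one[simp]: "meval img mconst (1 :: ('v,'c::comm_semiring_1) mpoly) = (1::('w,'c) mpoly)"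
  apply (subst single_one[symmetric])
  apply (simp only: meval_single monoev_def)
  apply simp
  done

lemma meval_prod: "meval img mconst (\<Prod>i\<in>S. f i) = (\<Prod>i\<in>S. meval img mconst (f i))"
  by (induction S rule: infinite_finite_induct) (simp_all add: meval_mult)

lemma meval_mvar: "meval img mconst (mvar v) = img v"
  unfolding mvar_def meval_single mono_single1 by simp



lemma sum_psubset:
  fixes f :: "'a set \<Rightarrow> 'r::ab_group_add"
  assumes "finite I"
  shows "(\<Sum>L | L \<subset> I. f L) = (\<Sum>L\<in>Pow I. f L) - f I"
proof -
  have "Pow I = insert I {L. L \<subset> I}" by auto
  moreover have "{L. L \<subset> I} \<subseteq> Pow I" by auto
  then have "finite {L. L \<subset> I}" by (rule finite_subset) (simp add: assms)
  ultimately show ?thesis by simp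
qed

lemma key_identity:
  fixes x y :: "nat \<Rightarrow> 'r::comm_ring_1"
  assumes two: "(2::'r) = 0"
    and fin: "finite I" "finite J" "finite K"
    and disj: "I \<inter> J = {}" "I \<inter> K = {}" "J \<inter> K = {}"
  defines "trr \<equiv> \<lambda>C. prod y C + prod (\<lambda>s. y s + x s) C"
    and "NN \<equiv> \<lambda>s. y s ^ 2 + x s * y s"
  shows "trr (I \<union> J) * trr (I \<union> K)
        + (\<Sum>L | L \<subset> I. prod x (I - L) * prod NN L * trr ((I - L) \<union> J \<union> K))
        + prod NN I * (\<Sum>L | L \<subset> J. prod x (J - L) * trr (L \<union> K)) = 0"
proof -
  define z where "z s = y s + x s" for s
  have trz: "trr C = prod y C + prod z C" for C by (simp add: trr_def z_def)
  have Nyz: "NN s = y s * z s" for s by (simp add: NN_def z_def power2_eq_square algebra_simps)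
  have Nxy: "NN s + x s * y s = y s * y s" for s
  proof -
    have "NN s + x s * y s = y s * y s + 2 * (x s * y s)" by (simp add: NN_def power2_eq_square algebra_simps)
    then show ?thesis using two by simp
  qed
  have Nxz: "NN s + x s * z s = z s * z s" for s
  proof -
    show ?thesis by (simp add: NN_def z_def power2_eq_square algebra_simps)
  qed
  have zx: "z s + x s = y s" for s
  proof -
    have "z s + x s = y s + 2 * x s" by (simp add: z_def algebra_simps)
    then show ?thesis using two by simp
  qed
  define a where "a = prod y I"
  define b where "b = prod z I"
  define c where "c = prod y J"
  define d where "d = prod z J"
  define e where "e = prod y K"
  define f where "f = prod z K"
  have tIJ: "trr (I \<union> J) = a * c + b * d"
    using fin disj by (simp add: trz prod.union_disjoint a_def b_def c_def d_def)
  have tIK: "trr (I \<union> K) = a * e + b * f"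
    using fin disj by (simp add: trz prod.union_disjoint a_def b_def e_def f_def)
  have NI: "prod NN I = a * b" by (simp add: Nyz prod.distrib a_def b_def)
  have s1: "(\<Sum>L\<in>Pow I. prod x (I - L) * prod NN L * trr ((I - L) \<union> J \<union> K)) = c * e * (a * a) + d * f * (b * b)"
  proof -
    have "(\<Sum>L\<in>Pow I. prod x (I - L) * prod NN L * trr ((I - L) \<union> J \<union> K))
        = (\<Sum>L\<in>Pow I. c * e * (prod NN L * prod (\<lambda>s. x s * y s) (I - L)) + d * f * (prod NN L * prod (\<lambda>s. x s * z s) (I - L)))"
    proof (rule sum.cong[OF refl])
      fix L assume "L \<in> Pow I"
      then have L: "finite (I - L)" "(I - L) \<inter> J = {}" "(I - L) \<inter> K = {}" using fin disj by auto
      have "trr ((I - L) \<union> J \<union> K) = prod y (I - L) * c * e + prod z (I - L) * d * f"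
        using L fin disj by (simp add: trz prod.union_disjoint Int_Un_distrib2 c_def d_def e_def f_def)
      then show "prod x (I - L) * prod NN L * trr ((I - L) \<union> J \<union> K) =
          c * e * (prod NN L * prod (\<lambda>s. x s * y s) (I - L)) + d * f * (prod NN L * prod (\<lambda>s. x s * z s) (I - L))"
        by (simp add: prod.distrib algebra_simps)
    qed
    also have "\<dots> = c * e * (\<Prod>s\<in>I. NN s + x s * y s) + d * f * (\<Prod>s\<in>I. NN s + x s * z s)"
      using fin by (simp add: prod_add sum.distrib sum_distrib_left)
    also have "\<dots> = c * e * (a * a) + d * f * (b * b)"
      by (simp add: Nxy Nxz prod.distrib a_def b_def)
    finally show ?thesis .
  qed
  have s2: "(\<Sum>L\<in>Pow J. prod x (J - L) * trr (L \<union> K)) = e * d + f * c"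
  proof -
    have "(\<Sum>L\<in>Pow J. prod x (J - L) * trr (L \<union> K))
        = (\<Sum>L\<in>Pow J. e * (prod y L * prod x (J - L)) + f * (prod z L * prod x (J - L)))"
    proof (rule sum.cong[OF refl])
      fix L assume "L \<in> Pow J"
      then have L: "finite L" "L \<inter> K = {}" using fin disj by (auto dest: finite_subset)
      have "trr (L \<union> K) = prod y L * e + prod z L * f"
        using L fin by (simp add: trz prod.union_disjoint e_def f_def)
      then show "prod x (J - L) * trr (L \<union> K) = e * (prod y L * prod x (J - L)) + f * (prod z L * prod x (J - L))"
        by (simp add: algebra_simps)
    qed
    also have "\<dots> = e * (\<Prod>s\<in>J. y s + x s) + f * (\<Prod>s\<in>J. z s + x s)"
      using fin by (simp add: prod_add sum.distrib sum_distrib_left)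
    also have "\<dots> = e * d + f * c"
      by (simp add: zx z_def[symmetric] c_def d_def)
    finally show ?thesis .
  qed
  have tI: "prod x (I - I) * prod NN I * trr ((I - I) \<union> J \<union> K) = a * b * (c * e + d * f)"
    using fin disj by (simp add: NI trz prod.union_disjoint c_def d_def e_def f_def)
  have tJ: "prod x (J - J) * trr (J \<union> K) = c * e + d * f"
    using fin disj by (simp add: trz prod.union_disjoint c_def d_def e_def f_def)
  have "trr (I \<union> J) * trr (I \<union> K)
        + (\<Sum>L | L \<subset> I. prod x (I - L) * prod NN L * trr ((I - L) \<union> J \<union> K))
        + prod NN I * (\<Sum>L | L \<subset> J. prod x (J - L) * trr (L \<union> K))
      = (a * c + b * d) * (a * e + b * f) + (c * e * (a * a) + d * f * (b * b) - a * b * (c * e + d * f))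
        + a * b * (e * d + f * c - (c * e + d * f))"
    unfolding sum_psubset[OF fin(1)] sum_psubset[OF fin(2)] s1 s2 tI tJ unfolding tIJ tIK NI ..
  also have "\<dots> = 2 * (a*a*c*e + a*b*c*f + a*b*d*e + b*b*d*f - a*b*(c*e + d*f))"
    by (simp add: algebra_simps)
  also have "\<dots> = 0" using two by simp
  finally show ?thesis .
qed


lemma pi_zero[simp]: "pi 0 = 0" by (simp add: pi_def)
lemma pi_add: "pi (p + q) = pi p + pi q" by (simp add: pi_def meval_add)
lemma pi_mult: "pi (p * q) = pi p * pi q" by (simp add: pi_def meval_mult)
lemma pi_sum: "pi (\<Sum>i\<in>S. f i) = (\<Sum>i\<in>S. pi (f i))" by (simp add: pi_def meval_sum)
lemma pi_prod: "pi (\<Prod>i\<in>S. f i) = (\<Prod>i\<in>S. pi (f i))" by (simp add: pi_def meval_prod)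
lemma pi_mvar: "pi (mvar v) = pi_var v" by (simp add: pi_def meval_mvar)

lemma two_spoly:
  assumes "CHAR('a::comm_ring_1) = 2"
  shows "(2::'a spoly) = 0"
proof -
  have a: "(of_nat 2 :: 'a) = 0" using assms of_nat_CHAR[where 'a='a] by simp
  have "(2::'a spoly) = of_nat 2" by simp
  also have "\<dots> = Poly_Mapping.single 0 (of_nat 2)" by (simp only: single_of_nat)
  also have "\<dots> = 0" by (simp only: a single_zero)
  finally show ?thesis .
qed

lemma pi_Tr:
  assumes two: "(2::'a::comm_ring_1 spoly) = 0" and fin: "finite C"
  shows "pi (Tr C :: 'a qpoly) = tr C"
proof (cases "card C = 0")
  case True
  then have "C = {}" using fin by simp
  moreover have "(1::'a spoly) + 1 = 0" using two by (metis one_add_one)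
  ultimately show ?thesis using True by (simp add: Tr_def tr_def)
next
  case False
  show ?thesis
  proof (cases "card C = 1")
    case True
    then obtain s where C: "C = {s}" by (metis card_1_singletonE)
    have "sy s + (sy s + sx s) = (2::'a spoly) * sy s + sx s" by (simp add: algebra_simps mult_2)
    also have "\<dots> = sx s" using two by simp
    finally show ?thesis using C by (simp add: Tr_def tr_def qx_def pi_mvar)
  next
    case False2: False
    then show ?thesis using False by (simp add: Tr_def pi_mvar)
  qed
qed

theorem mainTheorem3:
  fixes A B :: "nat set" and m :: nat
  assumes char2: "CHAR('a::field) = 2"
    and m: "m \<ge> 1"
    and AB: "A \<subseteq> {1..m}" "B \<subseteq> {1..m}"
    and cA: "card A \<ge> 2" and cB: "card B \<ge> 2"
  shows "let I = A \<inter> B; J = A - B; K = B - A in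
     pi ((Tr A * Tr B
        + (\<Sum>L | L \<subset> I. xpow (I - L) * Npow L * Tr ((I - L) \<union> J \<union> K))
        + Npow I * (\<Sum>L | L \<subset> J. xpow (J - L) * Tr (L \<union> K))) :: 'a qpoly) = 0"
proof -
  define I where "I = A \<inter> B"
  define J where "J = A - B"
  define K where "K = B - A"
  have finA: "finite A" "finite B" using AB by (auto intro: finite_subset)
  then have fin: "finite I" "finite J" "finite K" by (simp_all add: I_def J_def K_def)
  have disj: "I \<inter> J = {}" "I \<inter> K = {}" "J \<inter> K = {}" by (auto simp: I_def J_def K_def)
  have AI: "A = I \<union> J" "B = I \<union> K" by (auto simp: I_def J_def K_def)
  have two: "(2::'a spoly) = 0" by (rule two_spoly[OF char2])
  have piTr: "finite C \<Longrightarrow> pi (Tr C :: 'a qpoly) = tr C" for C by (rule pi_Tr[OF two])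
  have pix: "pi (xpow S :: 'a qpoly) = prod sx S" for S by (simp add: xpow_def pi_prod qx_def pi_mvar)
  have piN: "pi (Npow S :: 'a qpoly) = prod (\<lambda>s. sy s ^ 2 + sx s * sy s) S" for S
    by (simp add: Npow_def pi_prod qN_def pi_mvar)
  have s1: "pi (\<Sum>L | L \<subset> I. xpow (I - L) * Npow L * Tr ((I - L) \<union> J \<union> K) :: 'a qpoly)
     = (\<Sum>L | L \<subset> I. prod sx (I - L) * prod (\<lambda>s. sy s ^ 2 + sx s * sy s) L * tr ((I - L) \<union> J \<union> K))"
    unfolding pi_sum
  proof (rule sum.cong[OF refl])
    fix L assume "L \<in> {L. L \<subset> I}"
    then have "finite ((I - L) \<union> J \<union> K)" using fin by auto
    then show "pi (xpow (I - L) * Npow L * Tr ((I - L) \<union> J \<union> K) :: 'a qpoly) =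
         prod sx (I - L) * prod (\<lambda>s. sy s ^ 2 + sx s * sy s) L * tr ((I - L) \<union> J \<union> K)"
      by (simp add: pi_mult pix piN piTr)
  qed
  have s2: "pi (\<Sum>L | L \<subset> J. xpow (J - L) * Tr (L \<union> K) :: 'a qpoly)
     = (\<Sum>L | L \<subset> J. prod sx (J - L) * tr (L \<union> K))"
    unfolding pi_sum
  proof (rule sum.cong[OF refl])
    fix L assume "L \<in> {L. L \<subset> J}"
    then have "L \<subseteq> J" by auto
    then have "finite L" using fin(2) by (rule finite_subset)
    then have "finite (L \<union> K)" using fin by simp
    then show "pi (xpow (J - L) * Tr (L \<union> K) :: 'a qpoly) = prod sx (J - L) * tr (L \<union> K)"
      by (simp add: pi_mult pix piTr)
  qed
  have "pi ((Tr A * Tr B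
        + (\<Sum>L | L \<subset> I. xpow (I - L) * Npow L * Tr ((I - L) \<union> J \<union> K))
        + Npow I * (\<Sum>L | L \<subset> J. xpow (J - L) * Tr (L \<union> K))) :: 'a qpoly) = 0"
    unfolding pi_add pi_mult s1 s2 piN piTr[OF finA(1)] piTr[OF finA(2)]
    unfolding AI tr_def using key_identity[OF two fin disj, of sy sx] by simp
  then show ?thesis by (simp add: I_def J_def K_def Let_def)
qed

end
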